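(* There exist absolute constants $c,C>0$ such that for every integer $k'\ge0$, all $\mu_1,\dots,\mu_{k'}\in\mathbb R$, and every even integer $t\ge0$, the polynomial $p(x)=(x-\mu_1)^2(x-\mu_2)^2\cdots(x-\mu_{k'})^2$ satisfies $$\frac{\mathbf E_{x\sim\mathcal N(0,1)}\big[x^{2t}p(x)^2\big]}{\big(\mathbf E_{x\sim\mathcal N(0,1)}[x^t p(x)]\big)^2}\ \ge\ 2^{\,ct - C(k'+1)} .$$ *)

theory Defs
  imports "HOL-Probability.Probability"
begin

end

theory Submission
  imports Defs "HOL-Computational_Algebra.Polynomial"
begin

lemma scale_lemma:
  fixes \<beta> :: real
  assumes b: "\<beta> < 1/2"
  shows "integrable std_normal_distribution (\<lambda>x. x^n * exp (\<beta>*x\<^sup>2))"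
    and "(LINT x|std_normal_distribution. x^n * exp (\<beta>*x\<^sup>2)) =
         (1/sqrt(1-2*\<beta>))^(n+1) * (LINT x|std_normal_distribution. x^n)"
proof -
  define \<sigma> where "\<sigma> = 1/sqrt(1-2*\<beta>)"
  have s0: "\<sigma> > 0" using b by (simp add: \<sigma>_def)
  have s2: "\<sigma>^2 * (1 - 2*\<beta>) = 1" using b by (simp add: \<sigma>_def power_divide)
  define f where "f = (\<lambda>x::real. std_normal_density x * (x^n * exp (\<beta>*x\<^sup>2)))"
  have key: "f (0 + \<sigma> * y) = \<sigma>^n * (std_normal_density y * y^n)" for y
  proof -
    have "- (\<sigma>*y)\<^sup>2 / 2 + \<beta> * (\<sigma>*y)\<^sup>2 = - y\<^sup>2/2"
    proof -
      have "- (\<sigma>*y)\<^sup>2 / 2 + \<beta> * (\<sigma>*y)\<^sup>2 = - (\<sigma>^2 * (1 - 2*\<beta>)) * y^2/2"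
        by (simp add: algebra_simps power_mult_distrib)
      then show ?thesis using s2 by simp
    qed
    then have "exp (- (\<sigma>*y)\<^sup>2 / 2) * exp (\<beta> * (\<sigma>*y)\<^sup>2) = exp (- y\<^sup>2/2)"
      by (metis exp_add)
    then show ?thesis unfolding f_def std_normal_density_def
      by (simp add: algebra_simps)
  qed
  have i1: "integrable lborel (\<lambda>y. f (0 + \<sigma> * y))"
    unfolding key using integrable_std_normal_moment[of n] by simp
  have i2: "integrable lborel f"
    using i1 lborel_integrable_real_affine_iff[of \<sigma> f 0] s0 by simp
  have e1: "integral\<^sup>L lborel f = \<sigma>^(n+1) * integral\<^sup>L lborel (\<lambda>y. std_normal_density y * y^n)"
    using lborel_integral_real_affine[of \<sigma> f 0] s0 unfolding key by simp
  show "integrable std_normal_distribution (\<lambda>x. x^n * exp (\<beta>*x\<^sup>2))"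
    using i2 unfolding f_def by (subst integrable_density) auto
  show "(LINT x|std_normal_distribution. x^n * exp (\<beta>*x\<^sup>2)) =
         (1/sqrt(1-2*\<beta>))^(n+1) * (LINT x|std_normal_distribution. x^n)"
    using e1 unfolding f_def \<sigma>_def by (simp add: integral_density)
qed

lemma prod_dist:
  assumes "l \<le> D"
  shows "(\<Prod>k\<in>{0..D}-{l}. \<bar>real l - real k\<bar>) = fact l * fact (D - l)"
proof -
  have split: "{0..D}-{l} = {0..<l} \<union> {Suc l..D}" using assms by auto
  have a: "(\<Prod>k\<in>{0..<l}. \<bar>real l - real k\<bar>) = fact l"
  proof -
    have "(\<Prod>k\<in>{0..<l}. \<bar>real l - real k\<bar>) = (\<Prod>k\<in>{0..<l}. real (l - k))"
      by (rule prod.cong) auto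
    also have "\<dots> = real (\<Prod>k\<in>{0..<l}. l - k)" by simp
    also have "\<dots> = fact l" by (simp add: fact_prod_rev)
    finally show ?thesis .
  qed
  have b: "(\<Prod>k\<in>{Suc l..D}. \<bar>real l - real k\<bar>) = fact (D - l)" using assms
  proof (induction D)
    case 0 then show ?case by simp
  next
    case (Suc D)
    show ?case
    proof (cases "l = Suc D")
      case True then show ?thesis by simp
    next
      case False
      then have lD: "l \<le> D" using Suc.prems by simp
      have "{Suc l..Suc D} = insert (Suc D) {Suc l..D}" using lD by auto
      then have "(\<Prod>k\<in>{Suc l..Suc D}. \<bar>real l - real k\<bar>)
          = \<bar>real l - real (Suc D)\<bar> * (\<Prod>k\<in>{Suc l..D}. \<bar>real l - real k\<bar>)"
        by simp
      also have "\<dots> = real (Suc (D - l)) * fact (D - l)"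
        using Suc.IH[OF lD] lD by (simp add: of_nat_diff)
      also have "\<dots> = fact (Suc D - l)" using lD by (simp add: Suc_diff_le)
      finally show ?thesis .
    qed
  qed
  have "(\<Prod>k\<in>{0..D}-{l}. \<bar>real l - real k\<bar>) =
        (\<Prod>k\<in>{0..<l}. \<bar>real l - real k\<bar>) * (\<Prod>k\<in>{Suc l..D}. \<bar>real l - real k\<bar>)"
    unfolding split by (rule prod.union_disjoint) auto
  then show ?thesis using a b by simp
qed

lemma pow_self_le_fact: "real D ^ D \<le> 3 ^ D * fact D"
proof (induction D)
  case 0 then show ?case by simp
next
  case (Suc D)
  have r: "real (Suc D) ^ D \<le> 3 * real D ^ D"
  proof (cases "D = 0")
    case True then show ?thesis by simp
  next
    case False
    have "real (Suc D) ^ D = (1 + 1 / real D) ^ D * real D ^ D"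
      using False by (simp add: power_mult_distrib[symmetric] field_simps)
    also have "(1 + 1 / real D) ^ D \<le> exp (1 / real D) ^ D"
      by (rule power_mono) (simp_all add: add_nonneg_nonneg)
    also have "exp (1 / real D) ^ D = exp 1"
      using False by (simp add: exp_of_nat_mult[symmetric])
    also have "exp 1 \<le> (3::real)" by (rule exp_le)
    finally show ?thesis by (simp add: mult_right_mono)
  qed
  have "real (Suc D) ^ Suc D = real (Suc D) * real (Suc D) ^ D" by simp
  also have "\<dots> \<le> real (Suc D) * (3 * (3 ^ D * fact D))"
    using r Suc.IH by (intro mult_left_mono) auto
  also have "\<dots> = 3 ^ Suc D * fact (Suc D)" by (simp add: algebra_simps)
  finally show ?case .
qed

lemma poly_sum_le:
  fixes P :: "real poly"
  assumes "degree P \<le> D"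
  shows "poly P x = (\<Sum>i\<le>D. coeff P i * x ^ i)"
  unfolding poly_altdef
  by (rule sum.mono_neutral_left) (use assms le_degree in auto)

lemma lagrange_interp:
  fixes z :: "nat \<Rightarrow> real" and F :: "real poly"
  assumes inj: "inj_on z {0..D}" and deg: "degree F \<le> D"
  shows "(\<Sum>l\<in>{0..D}. (\<Prod>k\<in>{0..D}-{l}. (x - z k)/(z l - z k)) * poly F (z l)) = poly F x"
proof -
  define L where "L l = smult (1/(\<Prod>k\<in>{0..D}-{l}. (z l - z k))) (\<Prod>k\<in>{0..D}-{l}. [:-z k, 1:])" for l
  have polyL: "poly (L l) y = (\<Prod>k\<in>{0..D}-{l}. (y - z k)/(z l - z k))" for l y
    unfolding L_def by (simp add: poly_prod prod_dividef)
  have degL: "degree (L l) \<le> D" if "l \<in> {0..D}" for l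
  proof -
    have "degree (L l) \<le> degree (\<Prod>k\<in>{0..D}-{l}. [:-z k, 1:])" unfolding L_def by (rule degree_smult_le)
    also have "\<dots> \<le> sum (degree \<circ> (\<lambda>k. [:-z k, 1:])) ({0..D}-{l})" by (rule degree_prod_sum_le) auto
    also have "\<dots> = card ({0..D}-{l})" by simp
    also have "\<dots> = D" using that by simp
    finally show ?thesis .
  qed
  define G where "G = (\<Sum>l\<in>{0..D}. smult (poly F (z l)) (L l)) - F"
  have degG: "degree G \<le> D"
    unfolding G_def
    by (intro degree_diff_le degree_sum_le order.trans[OF degree_smult_le] degL deg) auto
  have Lz: "poly (L l) (z j) = (if l = j then 1 else 0)" if "l \<in> {0..D}" "j \<in> {0..D}" for l j
  proof (cases "l = j")
    case True
    have "(\<Prod>k\<in>{0..D}-{l}. (z j - z k)/(z l - z k)) = (\<Prod>k\<in>{0..D}-{l}. 1)"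
    proof (rule prod.cong)
      fix k assume "k \<in> {0..D}-{l}"
      then have "z l \<noteq> z k" using inj that by (auto dest: inj_onD)
      then show "(z j - z k)/(z l - z k) = 1" using True by simp
    qed simp
    then show ?thesis using True by (simp add: polyL)
  next
    case False
    have "(\<Prod>k\<in>{0..D}-{l}. (z j - z k)/(z l - z k)) = 0"
      by (rule prod_zero) (use False that in auto)
    then show ?thesis using False by (simp add: polyL)
  qed
  have rootG: "poly G (z j) = 0" if "j \<in> {0..D}" for j
  proof -
    have "(\<Sum>l\<in>{0..D}. poly F (z l) * poly (L l) (z j)) = (\<Sum>l\<in>{0..D}. if l = j then poly F (z j) else 0)"
      by (rule sum.cong) (use Lz that in auto)
    also have "\<dots> = poly F (z j)" using that by simp
    finally show ?thesis unfolding G_def by (simp add: poly_sum)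
  qed
  have "G = 0"
  proof (rule ccontr)
    assume "G \<noteq> 0"
    then have "card {x. poly G x = 0} \<le> D" using card_poly_roots_bound degG le_trans by blast
    moreover have "z ` {0..D} \<subseteq> {x. poly G x = 0}" using rootG by auto
    then have "card (z ` {0..D}) \<le> card {x. poly G x = 0}"
      by (intro card_mono poly_roots_finite) (use \<open>G \<noteq> 0\<close> in auto)
    moreover have "card (z ` {0..D}) = Suc D" using card_image[OF inj] by simp
    ultimately show False by simp
  qed
  then have "poly G x = 0" by simp
  then show ?thesis unfolding G_def by (simp add: poly_sum polyL mult.commute)
qed

lemma poly_exp_integral:
  fixes P :: "real poly" and \<beta> :: real
  assumes b: "\<beta> < 1/2" and deg: "degree P \<le> D"
  shows "integrable std_normal_distribution (\<lambda>x. x^t * poly P x * exp (\<beta>*x\<^sup>2))"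
    and "(LINT x|std_normal_distribution. x^t * poly P x * exp (\<beta>*x\<^sup>2)) =
         (\<Sum>i\<le>D. coeff P i * ((1/sqrt(1-2*\<beta>))^(t+i+1) * (LINT x|std_normal_distribution. x^(t+i))))"
proof -
  have eq: "(\<lambda>x. x^t * poly P x * exp (\<beta>*x\<^sup>2)) =
      (\<lambda>x. \<Sum>i\<le>D. coeff P i * (x^(t+i) * exp (\<beta>*x\<^sup>2)))"
    by (rule ext) (simp add: poly_sum_le[OF deg] sum_distrib_left sum_distrib_right power_add algebra_simps)
  have int: "\<And>i. integrable std_normal_distribution (\<lambda>x. coeff P i * (x^(t+i) * exp (\<beta>*x\<^sup>2)))"
    using scale_lemma(1)[OF b] by simp
  show "integrable std_normal_distribution (\<lambda>x. x^t * poly P x * exp (\<beta>*x\<^sup>2))"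
    unfolding eq by (rule Bochner_Integration.integrable_sum[of "{..D}" std_normal_distribution "\<lambda>i x. coeff P i * (x^(t+i) * exp (\<beta>*x\<^sup>2))"]) (rule int)
  show "(LINT x|std_normal_distribution. x^t * poly P x * exp (\<beta>*x\<^sup>2)) =
         (\<Sum>i\<le>D. coeff P i * ((1/sqrt(1-2*\<beta>))^(t+i+1) * (LINT x|std_normal_distribution. x^(t+i))))"
    unfolding eq
    by (subst Bochner_Integration.integral_sum[of "{..D}" std_normal_distribution "\<lambda>i x. coeff P i * (x^(t+i) * exp (\<beta>*x\<^sup>2))"])
       (use int scale_lemma[OF b] in auto)
qed

lemma main_bound:
  fixes m t :: nat and \<mu> :: "nat \<Rightarrow> real"
  assumes et: "even t"
  shows "(LINT x|std_normal_distribution. x^(2*t) * ((\<Prod>i\<in>{1..m}. (x - \<mu> i)^2))^2)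
           / (LINT x|std_normal_distribution. x^t * (\<Prod>i\<in>{1..m}. (x - \<mu> i)^2))^2
         \<ge> 2 powr (1/8 * real t - 25 * (real m + 1))"
proof -
  define N where "N = std_normal_distribution"
  define P where "P = (\<Prod>i\<in>{1..m}. [:-\<mu> i, 1:]^2)"
  define D where "D = 2*m"
  have polyP: "poly P x = (\<Prod>i\<in>{1..m}. (x - \<mu> i)^2)" for x
    unfolding P_def by (simp add: poly_prod)
  have degP: "degree P \<le> D"
  proof -
    have "degree P \<le> sum (degree \<circ> (\<lambda>i. [:-\<mu> i, 1:]^2)) {1..m}"
      unfolding P_def by (rule degree_prod_sum_le) auto
    also have "\<dots> = D" by (simp add: degree_linear_power D_def)
    finally show ?thesis .
  qed
  define M where "M n = (LINT x|N. x^n)" for n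
  define q where "q x = x^t * poly P x" for x
  define A where "A = (LINT x|N. q x)"
  define Q2 where "Q2 = (LINT x|N. (q x)^2)"
  define z where "z l = 1 + real (D+1+l) / (10 * real (D+1))" for l
  define \<beta> where "\<beta> l = (1 - 1/(z l)^2)/2" for l
  define d where "d l = (\<Prod>k\<in>{0..D}-{l}. (1 - z k)/(z l - z k))" for l
  define c where "c l = d l / z l^(t+1)" for l
  define v where "v x = (\<Sum>l\<in>{0..D}. c l * exp (\<beta> l * x\<^sup>2))" for x
  have zlo: "z l \<ge> 11/10" for l
    unfolding z_def by (simp add: field_simps)
  have zhi: "z l \<le> 6/5" if "l \<le> D" for l
    using that unfolding z_def by (simp add: field_simps)
  have zpos: "z l > 0" for l using zlo[of l] by simp
  have inj: "inj_on z {0..D}"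
    by (rule inj_onI) (simp add: z_def field_simps)
  have b12: "\<beta> l < 1/2" for l
    using zpos[of l] unfolding \<beta>_def by simp
  have sq: "1/sqrt(1 - 2*\<beta> l) = z l" for l
  proof -
    have "1 - 2*\<beta> l = (1/z l)^2" unfolding \<beta>_def by (simp add: power_divide diff_divide_distrib)
    then show ?thesis using zpos[of l] by simp
  qed
  have interp: "(\<Sum>l\<in>{0..D}. d l * z l ^ i) = 1" if "i \<le> D" for i
    using lagrange_interp[OF inj, of "monom 1 i" 1] that
    by (simp add: d_def poly_monom degree_monom_eq)
  have PE: "integrable N (\<lambda>x. x^t * poly P x * exp (\<beta> l*x\<^sup>2))"
           "(LINT x|N. x^t * poly P x * exp (\<beta> l*x\<^sup>2)) =
            (\<Sum>i\<le>D. coeff P i * (z l^(t+i+1) * M (t+i)))" for l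
    using poly_exp_integral[OF b12 degP, of t l] unfolding sq N_def M_def by auto
  have P0: "integrable N q" "A = (\<Sum>i\<le>D. coeff P i * M (t+i))"
    using poly_exp_integral[of 0 P D t, OF _ degP] unfolding N_def M_def A_def q_def by auto
  have qv_eq: "(\<lambda>x. q x * v x) = (\<lambda>x. \<Sum>l\<in>{0..D}. c l * (x^t * poly P x * exp (\<beta> l*x\<^sup>2)))"
    by (rule ext) (simp add: q_def v_def sum_distrib_left algebra_simps)
  have qv_int: "integrable N (\<lambda>x. q x * v x)"
    unfolding qv_eq
    by (rule Bochner_Integration.integrable_sum[of "{0..D}" N "\<lambda>l x. c l * (x^t * poly P x * exp (\<beta> l*x\<^sup>2))"])
       (use PE in auto)
  have "(LINT x|N. q x * v x) = (\<Sum>l\<in>{0..D}. c l * (\<Sum>i\<le>D. coeff P i * (z l^(t+i+1) * M (t+i))))"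
    unfolding qv_eq
    by (subst Bochner_Integration.integral_sum[of "{0..D}" N "\<lambda>l x. c l * (x^t * poly P x * exp (\<beta> l*x\<^sup>2))"])
       (use PE in auto)
  also have "\<dots> = (\<Sum>l\<in>{0..D}. \<Sum>i\<le>D. coeff P i * M (t+i) * (d l * z l ^ i))"
  proof (rule sum.cong[OF refl], unfold sum_distrib_left, rule sum.cong[OF refl])
    fix l i
    have "c l * z l^(t+i+1) = d l * z l ^ i"
      using zpos[of l] unfolding c_def by (simp add: power_add field_simps)
    then show "c l * (coeff P i * (z l ^ (t + i + 1) * M (t + i))) = coeff P i * M (t + i) * (d l * z l ^ i)"
      by (metis (no_types, lifting) mult.assoc mult.commute mult.left_commute)
  qed
  also have "\<dots> = (\<Sum>i\<le>D. coeff P i * M (t+i) * (\<Sum>l\<in>{0..D}. d l * z l ^ i))"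
    by (subst sum.swap) (simp add: sum_distrib_left)
  also have "\<dots> = A" using P0(2) interp by simp
  finally have Eqv: "(LINT x|N. q x * v x) = A" .
  have bsum: "\<beta> l + \<beta> l' < 1/2" and sq2: "1/sqrt(1 - 2*(\<beta> l + \<beta> l')) \<le> 2"
    if "l \<le> D" "l' \<le> D" for l l'
  proof -
    have "1/(z l)^2 \<ge> 25/36"
    proof -
      have "(z l)^2 \<le> (6/5)^2" using zhi[OF that(1)] zpos[of l] by (intro power_mono) auto
      then show ?thesis using zpos[of l] by (simp add: field_simps)
    qed
    moreover have "1/(z l')^2 \<ge> 25/36"
    proof -
      have "(z l')^2 \<le> (6/5)^2" using zhi[OF that(2)] zpos[of l'] by (intro power_mono) auto
      then show ?thesis using zpos[of l'] by (simp add: field_simps)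
    qed
    ultimately have w: "1 - 2*(\<beta> l + \<beta> l') \<ge> 1/4" unfolding \<beta>_def by (simp add: field_simps)
    then show "\<beta> l + \<beta> l' < 1/2" by simp
    have "sqrt (1/4) \<le> sqrt(1 - 2*(\<beta> l + \<beta> l'))" using w by (rule real_sqrt_le_mono)
    then have h: "1/2 \<le> sqrt(1 - 2*(\<beta> l + \<beta> l'))" by (simp add: real_sqrt_divide)
    then have "sqrt(1 - 2*(\<beta> l + \<beta> l')) > 0" by linarith
    then show "1/sqrt(1 - 2*(\<beta> l + \<beta> l')) \<le> 2" using h by (simp add: divide_le_eq)
  qed
  have M0: "M 0 = 1"
    using std_normal_distribution_even_moments(1)[of 0] unfolding M_def N_def by simp
  have v2_eq: "(\<lambda>x. (v x)^2) = (\<lambda>x. \<Sum>l\<in>{0..D}. \<Sum>l'\<in>{0..D}. c l * c l' * (x^0 * exp ((\<beta> l + \<beta> l') * x\<^sup>2)))"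
    by (rule ext) (simp add: v_def power2_eq_square sum_product exp_add[symmetric] algebra_simps)
  have E1: "integrable N (\<lambda>x. c l * c l' * (x^0 * exp ((\<beta> l + \<beta> l') * x\<^sup>2)))"
       "(LINT x|N. c l * c l' * (x^0 * exp ((\<beta> l + \<beta> l') * x\<^sup>2))) = c l * c l' * (1/sqrt(1 - 2*(\<beta> l + \<beta> l')))"
    if "l \<le> D" "l' \<le> D" for l l'
    using scale_lemma[OF bsum[OF that], of 0] M0 unfolding N_def M_def by auto
  have E2: "integrable N (\<lambda>x. \<Sum>l'\<in>{0..D}. c l * c l' * (x^0 * exp ((\<beta> l + \<beta> l') * x\<^sup>2)))"
     "(LINT x|N. (\<Sum>l'\<in>{0..D}. c l * c l' * (x^0 * exp ((\<beta> l + \<beta> l') * x\<^sup>2))))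
       = (\<Sum>l'\<in>{0..D}. c l * c l' * (1/sqrt(1 - 2*(\<beta> l + \<beta> l'))))"
    if "l \<le> D" for l
  proof -
    show "integrable N (\<lambda>x. \<Sum>l'\<in>{0..D}. c l * c l' * (x^0 * exp ((\<beta> l + \<beta> l') * x\<^sup>2)))"
      by (rule Bochner_Integration.integrable_sum[of "{0..D}" N "\<lambda>l' x. c l * c l' * (x^0 * exp ((\<beta> l + \<beta> l') * x\<^sup>2))"])
         (use E1 that in auto)
    show "(LINT x|N. (\<Sum>l'\<in>{0..D}. c l * c l' * (x^0 * exp ((\<beta> l + \<beta> l') * x\<^sup>2))))
       = (\<Sum>l'\<in>{0..D}. c l * c l' * (1/sqrt(1 - 2*(\<beta> l + \<beta> l'))))"
      by (subst Bochner_Integration.integral_sum[of "{0..D}" N "\<lambda>l' x. c l * c l' * (x^0 * exp ((\<beta> l + \<beta> l') * x\<^sup>2))"])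
         (use E1 that in auto)
  qed
  have v2_int: "integrable N (\<lambda>x. (v x)^2)"
    unfolding v2_eq
    by (rule Bochner_Integration.integrable_sum[of "{0..D}" N "\<lambda>l x. \<Sum>l'\<in>{0..D}. c l * c l' * (x^0 * exp ((\<beta> l + \<beta> l') * x\<^sup>2))"])
       (use E2 in auto)
  have "(LINT x|N. (v x)^2) = (\<Sum>l\<in>{0..D}. \<Sum>l'\<in>{0..D}. c l * c l' * (1/sqrt(1 - 2*(\<beta> l + \<beta> l'))))"
    unfolding v2_eq
    by (subst Bochner_Integration.integral_sum[of "{0..D}" N "\<lambda>l x. \<Sum>l'\<in>{0..D}. c l * c l' * (x^0 * exp ((\<beta> l + \<beta> l') * x\<^sup>2))"])
       (use E2 in auto)
  also have "\<dots> \<le> (\<Sum>l\<in>{0..D}. \<Sum>l'\<in>{0..D}. \<bar>c l\<bar> * \<bar>c l'\<bar> * 2)"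
  proof (intro sum_mono)
    fix l l' assume "l \<in> {0..D}" "l' \<in> {0..D}"
    then have b: "\<beta> l + \<beta> l' < 1/2" and h1: "1/sqrt(1 - 2*(\<beta> l + \<beta> l')) \<le> 2"
      using sq2[of l l'] bsum[of l l'] by auto
    have h2: "0 \<le> 1/sqrt(1 - 2*(\<beta> l + \<beta> l'))" using b by simp
    note h = h1 h2
    have "c l * c l' * (1/sqrt(1 - 2*(\<beta> l + \<beta> l'))) \<le> \<bar>c l * c l'\<bar> * (1/sqrt(1 - 2*(\<beta> l + \<beta> l')))"
      using h(2) by (intro mult_right_mono) auto
    also have "\<dots> \<le> \<bar>c l * c l'\<bar> * 2" using h(1) by (intro mult_left_mono) auto
    finally show "c l * c l' * (1/sqrt(1 - 2*(\<beta> l + \<beta> l'))) \<le> \<bar>c l\<bar> * \<bar>c l'\<bar> * 2"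
      by (simp add: abs_mult)
  qed
  also have "\<dots> = 2 * (\<Sum>l\<in>{0..D}. \<bar>c l\<bar>)^2"
    by (simp add: power2_eq_square sum_product sum_distrib_left algebra_simps)
  finally have V2: "(LINT x|N. (v x)^2) \<le> 2 * (\<Sum>l\<in>{0..D}. \<bar>c l\<bar>)^2" .
  have q2_int: "integrable N (\<lambda>x. (q x)^2)"
  proof -
    have "integrable N (\<lambda>x. x^(2*t) * poly (P*P) x * exp (0*x\<^sup>2))"
      using poly_exp_integral(1)[of 0 "P*P" "degree (P*P)" "2*t"] unfolding N_def by simp
    moreover have "(\<lambda>x. x^(2*t) * poly (P*P) x * exp (0*x\<^sup>2)) = (\<lambda>x. (q x)^2)"
      by (rule ext) (simp add: q_def power_mult_distrib power_mult power2_eq_square algebra_simps)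
    ultimately show ?thesis by simp
  qed
  have qnn: "q x \<ge> 0" for x
    unfolding q_def polyP using et by (intro mult_nonneg_nonneg prod_nonneg) auto
  have Apos: "A > 0"
  proof -
    have "A \<ge> 0" unfolding A_def using qnn by (intro integral_nonneg_AE) auto
    moreover have "A \<noteq> 0"
    proof
      assume "A = 0"
      then have "AE x in N. q x = 0"
        unfolding A_def using integral_nonneg_eq_0_iff_AE[OF P0(1)] qnn by auto
      then have "AE x in lborel. 0 < std_normal_density x \<longrightarrow> q x = 0"
        unfolding N_def by (subst (asm) AE_density) auto
      then have ae1: "AE x in lborel. q x = 0"
        by (rule AE_mp) (auto intro!: AE_I2 normal_density_pos)
      define F where "F = insert 0 (\<mu> ` {1..m})"
      have "finite F" unfolding F_def by simp
      then have ae2: "AE x in lborel. x \<notin> F"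
        by (intro AE_not_in finite_imp_null_set_lborel)
      have imp: "x \<in> F" if "q x = 0" for x
      proof -
        have "x^t * (\<Prod>i\<in>{1..m}. (x - \<mu> i)^2) = 0" using that unfolding q_def polyP by simp
        then have "x = 0 \<or> (\<exists>i\<in>{1..m}. x = \<mu> i)" by (auto simp: prod_zero_iff)
        then show "x \<in> F" unfolding F_def by auto
      qed
      have "AE x in (lborel::real measure). False"
        using eventually_mono[OF AE_conjI[OF ae1 ae2], of "\<lambda>x. False"] imp by blast
      then have "ae_filter lborel = (bot :: real filter)" using trivial_limit_def by blast
      then have "emeasure (lborel::real measure) (space lborel) = 0" by (simp add: ae_filter_eq_bot_iff)
      then show False by simp
    qed
    ultimately show ?thesis by simp
  qed
  have dbound: "\<bar>d l\<bar> \<le> 24^D" if "l \<le> D" for l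
  proof -
    have fpos: "fact l * fact (D - l) > (0::real)" by simp
    have "\<bar>d l\<bar> = (\<Prod>k\<in>{0..D}-{l}. \<bar>1 - z k\<bar> / \<bar>z l - z k\<bar>)"
      by (simp add: d_def abs_prod abs_divide)
    also have "\<dots> \<le> (\<Prod>k\<in>{0..D}-{l}. real (2*(D+1)) / \<bar>real l - real k\<bar>)"
    proof (rule prod_mono)
      fix k assume k: "k \<in> {0..D}-{l}"
      have e: "\<bar>1 - z k\<bar> / \<bar>z l - z k\<bar> = real (D+1+k) / \<bar>real l - real k\<bar>"
      proof -
        have "1 - z k = - (real (D+1+k) / (10 * real (D+1)))" unfolding z_def by simp
        moreover have "z l - z k = (real l - real k) / (10 * real (D+1))"
        proof -
          have "z l - z k = real (D+1+l)/(10*real(D+1)) - real (D+1+k)/(10*real(D+1))"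
            unfolding z_def by simp
          also have "\<dots> = (real (D+1+l) - real (D+1+k))/(10*real(D+1))"
            by (rule diff_divide_distrib[symmetric])
          also have "real (D+1+l) - real (D+1+k) = real l - real k" by simp
          finally show ?thesis .
        qed
        ultimately show ?thesis by (simp add: abs_divide)
      qed
      have "real (D+1+k) \<le> real (2*(D+1))" using k by simp
      then have "real (D+1+k) / \<bar>real l - real k\<bar> \<le> real (2*(D+1)) / \<bar>real l - real k\<bar>"
        by (rule divide_right_mono) simp
      then show "0 \<le> \<bar>1 - z k\<bar> / \<bar>z l - z k\<bar> \<and>
                 \<bar>1 - z k\<bar> / \<bar>z l - z k\<bar> \<le> real (2*(D+1)) / \<bar>real l - real k\<bar>"
        using e by simp
    qed
    also have "\<dots> = real (2*(D+1)) ^ D / (fact l * fact (D - l))"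
      using that by (simp add: prod_dividef prod_dist)
    also have "\<dots> \<le> 24^D"
    proof -
      have "real (2*(D+1)) ^ D \<le> (4 * real D) ^ D"
      proof (cases "D = 0")
        case True then show ?thesis by simp
      next
        case False then show ?thesis by (intro power_mono) auto
      qed
      also have "\<dots> = 4^D * real D ^ D" by (simp add: power_mult_distrib)
      also have "\<dots> \<le> 4^D * (3^D * fact D)" using pow_self_le_fact[of D] by (intro mult_left_mono) auto
      also have "fact D = fact l * fact (D - l) * real (D choose l)"
        using binomial_fact_lemma[OF that] by (metis of_nat_fact of_nat_mult)
      also have "real (D choose l) \<le> 2^D"
        using binomial_le_pow2[of D l] by (metis of_nat_le_iff of_nat_numeral of_nat_power)
      then have "4^D * (3^D * (fact l * fact (D - l) * real (D choose l))) \<le> 4^D * (3^D * (fact l * fact (D - l) * 2^D))"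
        by (intro mult_left_mono) auto
      also have "\<dots> = 24^D * (fact l * fact (D - l))"
        by (simp add: power_mult_distrib[symmetric] algebra_simps)
      finally show ?thesis using fpos by (simp add: divide_le_eq)
    qed
    finally show ?thesis .
  qed
  have cbound: "\<bar>c l\<bar> \<le> 24^D * (10/11)^t" if "l \<le> D" for l
  proof -
    have "(11/10)^t \<le> z l ^ t" using zlo[of l] by (intro power_mono) auto
    also have "\<dots> \<le> z l ^ (t+1)" using zlo[of l] by (intro power_increasing) auto
    finally have zt: "(11/10)^t \<le> z l ^ (t+1)" .
    have "\<bar>c l\<bar> = \<bar>d l\<bar> / z l ^ (t+1)" unfolding c_def using zpos[of l] by (simp add: abs_divide)
    also have "\<dots> \<le> 24^D / z l ^ (t+1)" using dbound[OF that] zpos[of l] by (intro divide_right_mono) auto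
    also have "\<dots> \<le> 24^D / (11/10)^t" using zt zpos[of l] by (intro divide_left_mono) auto
    also have "\<dots> = 24^D * (10/11)^t" by (simp add: power_divide)
    finally show ?thesis .
  qed
  define S where "S = (\<Sum>l\<in>{0..D}. \<bar>c l\<bar>)"
  have S0: "S \<ge> 0" unfolding S_def by (simp add: sum_nonneg)
  have Sb: "S \<le> real (D+1) * 24^D * (10/11)^t"
  proof -
    have "S \<le> (\<Sum>l\<in>{0..D}. 24^D * (10/11)^t)" unfolding S_def by (rule sum_mono) (use cbound in auto)
    also have "\<dots> = real (D+1) * 24^D * (10/11)^t" by simp
    finally show ?thesis .
  qed
  define K where "K = 2 * (real (D+1) * 24^D)^2 * (100/121)^t"
  have Kpos: "K > 0" unfolding K_def by simp
  have VK: "(LINT x|N. (v x)^2) \<le> K"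
  proof -
    have "S^2 \<le> (real (D+1) * 24^D * (10/11)^t)^2" using S0 Sb by (intro power_mono) auto
    also have "\<dots> = (real (D+1) * 24^D)^2 * (100/121)^t"
    proof -
      have "((10/11::real)^t)^2 = ((10/11)^2)^t" by (metis power_mult mult.commute)
      also have "(10/11::real)^2 = 100/121" by (simp add: power2_eq_square)
      finally have "((10/11::real)^t)^2 = (100/121)^t" .
      then show ?thesis by (simp add: power_mult_distrib)
    qed
    finally show ?thesis using V2 unfolding K_def S_def by simp
  qed
  \<comment> \<open>Cauchy-Schwarz\<close>
  have CS: "A^2 \<le> K * Q2"
  proof -
    define lam where "lam = A / K"
    have lpos: "lam > 0" unfolding lam_def using Apos Kpos by simp
    have "(LINT x|N. 2*lam*(q x * v x)) \<le> (LINT x|N. (q x)^2 + lam^2 * (v x)^2)"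
    proof (rule integral_mono)
      show "integrable N (\<lambda>x. 2*lam*(q x * v x))" using qv_int by simp
      show "integrable N (\<lambda>x. (q x)^2 + lam^2 * (v x)^2)" using q2_int v2_int by simp
      fix x
      have "0 \<le> (q x - lam * v x)^2" by simp
      then show "2*lam*(q x * v x) \<le> (q x)^2 + lam^2 * (v x)^2"
        by (simp add: power2_eq_square algebra_simps)
    qed
    then have "2*lam*A \<le> Q2 + lam^2 * (LINT x|N. (v x)^2)"
      using Eqv q2_int v2_int unfolding Q2_def by simp
    also have "\<dots> \<le> Q2 + lam^2 * K" using VK by (intro add_left_mono mult_left_mono) auto
    finally have "2*lam*A \<le> Q2 + lam^2 * K" .
    then have "2*A^2/K \<le> Q2 + A^2/K" unfolding lam_def using Kpos
      by (simp add: power2_eq_square field_simps)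
    then have "A^2/K \<le> Q2" by simp
    then show ?thesis using Kpos by (simp add: divide_le_eq mult.commute)
  qed
  have A2pos: "A^2 > 0" using Apos by simp
  have r1: "1/K \<le> Q2 / A^2"
    using CS Kpos A2pos by (simp add: divide_le_eq le_divide_eq mult.commute)
  have n1: "2 powr (1/8 * real t) \<le> (121/100::real)^t"
  proof -
    have c: "(2::real) \<le> (121/100)^8" by (simp add: power_divide)
    have "2 powr (1/8::real) \<le> ((121/100::real)^8) powr (1/8)"
      using c by (rule powr_mono2[rotated 2]) auto
    also have "((121/100::real)^8) powr (1/8) = 121/100"
    proof -
      have "((121/100::real)^8) powr (1/8) = ((121/100::real) powr (real 8)) powr (1/8)"
        by (subst powr_realpow) auto
      also have "\<dots> = (121/100) powr (real 8 * (1/8))" by (rule powr_powr)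
      also have "\<dots> = 121/100" by simp
      finally show ?thesis .
    qed
    finally have b: "2 powr (1/8::real) \<le> 121/100" .
    have "2 powr (1/8 * real t) = (2 powr (1/8::real)) powr (real t)"
      by (simp add: powr_powr)
    also have "\<dots> = (2 powr (1/8::real)) ^ t" by (rule powr_realpow) simp
    also have "\<dots> \<le> (121/100)^t" using b by (intro power_mono) auto
    finally show ?thesis .
  qed
  have n2: "2 * (real (D+1) * 24^D)^2 \<le> (2::real) ^ (25*(m+1))"
  proof -
    have "Suc D \<le> 2^D" by (rule Suc_leI[OF less_exp])
    then have "D + 1 \<le> 2^D" by simp
    then have "real (D+1) \<le> 2^D" by (metis of_nat_le_iff of_nat_numeral of_nat_power)
    then have "real (D+1) * 24^D \<le> 2^D * 24^D" by (intro mult_right_mono) auto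
    also have "\<dots> = 48^D" by (simp add: power_mult_distrib[symmetric])
    also have "\<dots> \<le> 64^D" by (intro power_mono) auto
    also have "(64::real)^D = 2^(6*D)" by (simp add: power_mult)
    finally have "real (D+1) * 24^D \<le> 2^(6*D)" .
    then have "(real (D+1) * 24^D)^2 \<le> (2^(6*D))^2" by (intro power_mono) auto
    also have "\<dots> = 2^(24*m)" by (simp add: D_def power_mult[symmetric])
    finally have "2 * (real (D+1) * 24^D)^2 \<le> 2 * 2^(24*m)" by simp
    also have "\<dots> = (2::real)^(24*m+1)" by simp
    also have "\<dots> \<le> 2^(25*(m+1))" by (intro power_increasing) auto
    finally show ?thesis .
  qed
  have r2: "2 powr (1/8 * real t - 25 * (real m + 1)) \<le> 1/K"
  proof -
    have "2 powr (1/8 * real t - 25 * (real m + 1)) = 2 powr (1/8 * real t) / 2 powr (25 * (real m + 1))"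
      by (rule powr_diff)
    also have "2 powr (25 * (real m + 1)) = (2::real) ^ (25*(m+1))"
    proof -
      have "25 * (real m + 1) = real (25*(m+1))" by simp
      then show ?thesis by (simp only: powr_realpow)
    qed
    also have "2 powr (1/8 * real t) / (2::real) ^ (25*(m+1)) \<le> (121/100)^t / (2 * (real (D+1) * 24^D)^2)"
      using n1 n2 by (intro frac_le) auto
    also have "\<dots> = 1/K" unfolding K_def by (simp add: power_divide field_simps)
    finally show ?thesis .
  qed
  have eA: "(\<lambda>x. x^t * (\<Prod>i\<in>{1..m}. (x - \<mu> i)^2)) = q"
    by (rule ext) (simp add: q_def polyP)
  have eQ: "(\<lambda>x. x^(2*t) * ((\<Prod>i\<in>{1..m}. (x - \<mu> i)^2))^2) = (\<lambda>x. (q x)^2)"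
    by (rule ext) (simp add: q_def polyP power_mult_distrib power_mult mult.commute)
  show ?thesis
    unfolding eA eQ using r1 r2 unfolding A_def Q2_def N_def by simp
qed

theorem mainTheorem8:
  shows "\<exists>c C :: real. c > 0 \<and> C > 0 \<and>
    (\<forall>(k'::nat) (\<mu>::nat \<Rightarrow> real) (t::nat).
       even t \<longrightarrow>
       (let p = (\<lambda>x::real. \<Prod>i\<in>{1..k'}. (x - \<mu> i)^2) in
         (LINT x|std_normal_distribution. x^(2*t) * (p x)^2)
           / (LINT x|std_normal_distribution. x^t * p x)^2
         \<ge> 2 powr (c * real t - C * (real k' + 1))))"
proof -
  have H: "\<forall>(k'::nat) (\<mu>::nat \<Rightarrow> real) (t::nat).
       even t \<longrightarrow>
       (let p = (\<lambda>x::real. \<Prod>i\<in>{1..k'}. (x - \<mu> i)^2) in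
         (LINT x|std_normal_distribution. x^(2*t) * (p x)^2)
           / (LINT x|std_normal_distribution. x^t * p x)^2
         \<ge> 2 powr ((1/8::real) * real t - (25::real) * (real k' + 1)))"
  proof (intro allI impI)
    fix k' :: nat and \<mu> :: "nat \<Rightarrow> real" and t :: nat
    assume "even t"
    then show "let p = (\<lambda>x::real. \<Prod>i\<in>{1..k'}. (x - \<mu> i)^2) in
         (LINT x|std_normal_distribution. x^(2*t) * (p x)^2)
           / (LINT x|std_normal_distribution. x^t * p x)^2
         \<ge> 2 powr ((1/8::real) * real t - (25::real) * (real k' + 1))"
      unfolding Let_def using main_bound[of t k' \<mu>] by simp
  qed
  show ?thesis
    by (rule exI[of _ "1/8::real"], rule exI[of _ "25::real"]) (use H in simp)
qed

end
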